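(* Let $G$ be a symmetric restaking network and $\alpha_t$ a tight attack in $G$. Then there exists a consolidated attack $\alpha_c$ in $G$ (for a suitable ordering $v_1,\dots,v_m$ of $V$) with $C(\alpha_c)\le C(\alpha_t)$ and $\Pi(\alpha_c)=\Pi(\alpha_t)$.
   Context: A restaking network is a tuple $G=(V,S,\sigma,w,\theta,\pi)$ with finite nonempty validator set $V$, finite service set $S$, stake $\sigma:V\to\mathbb{R}_{>0}$, allocation $w:V\times S\to\mathbb{R}_{\ge0}$ with $w(v,s)\le\sigma(v)$, thresholds $\theta:S\to[0,1]$, prizes $\pi:S\to\mathbb{R}_{>0}$. An attack is $\alpha:V\times S\to\mathbb{R}_{\ge0}$ with $\alpha(v,s)\le w(v,s)$; attacked services $S_\alpha=\{s:\sum_v\alpha(v,s)\ge\theta(s)\sum_v w(v,s)\}$; validator cost $c_v(\alpha)=\min(\sigma(v),\sum_{s\in S_\alpha}\alpha(v,s))$; total cost $C(\alpha)=\sum_vc_v(\alpha)$; prize $\Pi(\alpha)=\sum_{s\in S_\alpha}\pi(s)$. $G$ is symmetric if all validators have the same stake $\sigma$, for each $s$ all validators have the same allocation $w(s)$, and all services have the same threshold $\theta$. Let $m=|V|$. An attack is tight if $\sum_v\alpha(v,s)=\theta m\,w(s)$ for all $s\in S_\alpha$. With $V=\{v_1,\dots,v_m\}$, an attack is consolidated if for every $s\in S_\alpha$ and $i\in\{1,\dots,m\}$: $\alpha(v_i,s)=w(s)$ if $i\le\lfloor\theta m\rfloor$; $\alpha(v_i,s)=(\theta m-\lfloor\theta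 m\rfloor)w(s)$ if $i=\lfloor\theta m\rfloor+1$; $\alpha(v_i,s)=0$ otherwise. *)

theory Defs
  imports Complex_Main
begin

text \<open>A restaking network (V, S, sigma, w, theta, pi). Functions are total on the
  ambient types; only their values on V and S matter.\<close>

definition restaking_network ::
  "'v set \<Rightarrow> 's set \<Rightarrow> ('v \<Rightarrow> real) \<Rightarrow> ('v \<Rightarrow> 's \<Rightarrow> real)
   \<Rightarrow> ('s \<Rightarrow> real) \<Rightarrow> ('s \<Rightarrow> real) \<Rightarrow> bool" where
  "restaking_network V S \<sigma> w \<theta> \<pi> \<longleftrightarrow>
     finite V \<and> V \<noteq> {} \<and> finite S \<and>
     (\<forall>v\<in>V. \<sigma> v > 0) \<and>
     (\<forall>v\<in>V. \<forall>s\<in>S. 0 \<le> w v s \<and> w v s \<le> \<sigma> v) \<and>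
     (\<forall>s\<in>S. 0 \<le> \<theta> s \<and> \<theta> s \<le> 1) \<and>
     (\<forall>s\<in>S. \<pi> s > 0)"

definition symmetric_network ::
  "'v set \<Rightarrow> 's set \<Rightarrow> ('v \<Rightarrow> real) \<Rightarrow> ('v \<Rightarrow> 's \<Rightarrow> real)
   \<Rightarrow> ('s \<Rightarrow> real) \<Rightarrow> ('s \<Rightarrow> real) \<Rightarrow> real \<Rightarrow> ('s \<Rightarrow> real) \<Rightarrow> real \<Rightarrow> bool" where
  "symmetric_network V S \<sigma> w \<theta> \<pi> \<sigma>0 ws \<theta>0 \<longleftrightarrow>
     restaking_network V S \<sigma> w \<theta> \<pi> \<and>
     (\<forall>v\<in>V. \<sigma> v = \<sigma>0) \<and>
     (\<forall>v\<in>V. \<forall>s\<in>S. w v s = ws s) \<and>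
     (\<forall>s\<in>S. \<theta> s = \<theta>0)"

definition is_attack ::
  "'v set \<Rightarrow> 's set \<Rightarrow> ('v \<Rightarrow> 's \<Rightarrow> real) \<Rightarrow> ('v \<Rightarrow> 's \<Rightarrow> real) \<Rightarrow> bool" where
  "is_attack V S w \<alpha> \<longleftrightarrow> (\<forall>v\<in>V. \<forall>s\<in>S. 0 \<le> \<alpha> v s \<and> \<alpha> v s \<le> w v s)"

definition attacked ::
  "'v set \<Rightarrow> 's set \<Rightarrow> ('v \<Rightarrow> 's \<Rightarrow> real) \<Rightarrow> ('s \<Rightarrow> real) \<Rightarrow> ('v \<Rightarrow> 's \<Rightarrow> real) \<Rightarrow> 's set" where
  "attacked V S w \<theta> \<alpha> = {s\<in>S. (\<Sum>v\<in>V. \<alpha> v s) \<ge> \<theta> s * (\<Sum>v\<in>V. w v s)}"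

definition attack_cost ::
  "'v set \<Rightarrow> 's set \<Rightarrow> ('v \<Rightarrow> real) \<Rightarrow> ('v \<Rightarrow> 's \<Rightarrow> real) \<Rightarrow> ('s \<Rightarrow> real)
   \<Rightarrow> ('v \<Rightarrow> 's \<Rightarrow> real) \<Rightarrow> real" where
  "attack_cost V S \<sigma> w \<theta> \<alpha> =
     (\<Sum>v\<in>V. min (\<sigma> v) (\<Sum>s\<in>attacked V S w \<theta> \<alpha>. \<alpha> v s))"

definition attack_prize ::
  "'v set \<Rightarrow> 's set \<Rightarrow> ('v \<Rightarrow> 's \<Rightarrow> real) \<Rightarrow> ('s \<Rightarrow> real) \<Rightarrow> ('s \<Rightarrow> real)
   \<Rightarrow> ('v \<Rightarrow> 's \<Rightarrow> real) \<Rightarrow> real" where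
  "attack_prize V S w \<theta> \<pi> \<alpha> = (\<Sum>s\<in>attacked V S w \<theta> \<alpha>. \<pi> s)"

definition tight_attack ::
  "'v set \<Rightarrow> 's set \<Rightarrow> ('v \<Rightarrow> 's \<Rightarrow> real) \<Rightarrow> ('s \<Rightarrow> real) \<Rightarrow> ('s \<Rightarrow> real) \<Rightarrow> real
   \<Rightarrow> ('v \<Rightarrow> 's \<Rightarrow> real) \<Rightarrow> bool" where
  "tight_attack V S w \<theta> ws \<theta>0 \<alpha> \<longleftrightarrow>
     (\<forall>s\<in>attacked V S w \<theta> \<alpha>. (\<Sum>v\<in>V. \<alpha> v s) = \<theta>0 * real (card V) * ws s)"

text \<open>Consolidated attack with respect to an ordering ord : {1..m} -> V (a bijection).\<close>

definition consolidated_attack ::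
  "'v set \<Rightarrow> 's set \<Rightarrow> ('v \<Rightarrow> 's \<Rightarrow> real) \<Rightarrow> ('s \<Rightarrow> real) \<Rightarrow> ('s \<Rightarrow> real) \<Rightarrow> real
   \<Rightarrow> (nat \<Rightarrow> 'v) \<Rightarrow> ('v \<Rightarrow> 's \<Rightarrow> real) \<Rightarrow> bool" where
  "consolidated_attack V S w \<theta> ws \<theta>0 ord \<alpha> \<longleftrightarrow>
     (let m = card V; k = nat \<lfloor>\<theta>0 * real m\<rfloor> in
      \<forall>s\<in>attacked V S w \<theta> \<alpha>. \<forall>i\<in>{1..m}.
        \<alpha> (ord i) s =
          (if i \<le> k then ws s
           else if i = k + 1 then (\<theta>0 * real m - of_int \<lfloor>\<theta>0 * real m\<rfloor>) * ws s
           else 0))"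

end

theory Submission imports Defs begin

lemma sum_step:
  fixes a b :: real
  assumes "k \<le> m"
  shows "(\<Sum>i\<in>{1..m}. (if i \<le> k then a else if i = k+1 then b else 0))
         = real k * a + (if k < m then b else 0)"
  using assms
proof (induction m)
  case 0 then show ?case by simp
next
  case (Suc m)
  show ?case
  proof (cases "k \<le> m")
    case True
    have "(\<Sum>i\<in>{1..Suc m}. (if i \<le> k then a else if i = k+1 then b else 0))
       = (\<Sum>i\<in>{1..m}. (if i \<le> k then a else if i = k+1 then b else 0))
         + (if Suc m \<le> k then a else if Suc m = k+1 then b else 0)"
      by simp
    also have "\<dots> = real k * a + (if k < m then b else 0) + (if k = m then b else 0)"
      using Suc.IH True by auto
    finally show ?thesis using True by auto
  next
    case False
    then have k: "k = Suc m" using Suc.prems by simp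
    have "(\<Sum>i\<in>{1..Suc m}. (if i \<le> k then a else if i = k+1 then b else 0))
        = (\<Sum>i\<in>{1..Suc m}. a)" using k by (intro sum.cong) auto
    then show ?thesis using k by simp
  qed
qed

lemma key:
  fixes x :: "'v \<Rightarrow> real"
  assumes fin: "finite V" and bnd: "\<forall>v\<in>V. 0 \<le> x v \<and> x v \<le> W"
    and sp: "\<sigma> > 0" and W0: "0 \<le> W" and fr: "0 \<le> fr" "fr < 1"
    and tot: "(\<Sum>v\<in>V. x v) = (real k + fr) * W"
  shows "real k * min \<sigma> W + min \<sigma> (fr * W) \<le> (\<Sum>v\<in>V. min \<sigma> (x v))"
proof (cases "W \<le> \<sigma>")
  case True
  have "fr * W \<le> W" using fr W0 by (simp add: mult_left_le_one_le)
  hence "real k * min \<sigma> W + min \<sigma> (fr * W) = (real k + fr) * W"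
    using True by (simp add: algebra_simps)
  also have "\<dots> = (\<Sum>v\<in>V. min \<sigma> (x v))" unfolding tot[symmetric]
    using True bnd by (intro sum.cong) auto
  finally show ?thesis by simp
next
  case False
  define B where "B = {v\<in>V. x v \<ge> \<sigma>}"
  have Bs: "B \<subseteq> V" and fB: "finite B" using fin by (auto simp: B_def)
  have "(\<Sum>v\<in>V. min \<sigma> (x v)) = (\<Sum>v\<in>B. min \<sigma> (x v)) + (\<Sum>v\<in>V-B. min \<sigma> (x v))"
    using sum.subset_diff[OF Bs fin, of "\<lambda>v. min \<sigma> (x v)"] by linarith
  also have "(\<Sum>v\<in>B. min \<sigma> (x v)) = real (card B) * \<sigma>"
    by (simp add: B_def)
  also have "(\<Sum>v\<in>V-B. min \<sigma> (x v)) = (\<Sum>v\<in>V-B. x v)"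
    by (intro sum.cong) (auto simp: B_def)
  finally have eq: "(\<Sum>v\<in>V. min \<sigma> (x v)) = real (card B) * \<sigma> + (\<Sum>v\<in>V-B. x v)" .
  have "(\<Sum>v\<in>V. x v) = (\<Sum>v\<in>B. x v) + (\<Sum>v\<in>V-B. x v)"
    using sum.subset_diff[OF Bs fin, of x] by linarith
  moreover have "(\<Sum>v\<in>B. x v) \<le> real (card B) * W"
    using sum_bounded_above[of B x W] bnd Bs by auto
  ultimately have r1: "(\<Sum>v\<in>V-B. x v) \<ge> (real k + fr) * W - real (card B) * W"
    using tot by linarith
  have r0: "(\<Sum>v\<in>V-B. x v) \<ge> 0" using bnd by (intro sum_nonneg) auto
  have mW: "min \<sigma> W = \<sigma>" using False by simp
  show ?thesis
  proof (cases "card B \<ge> k + 1")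
    case True
    hence "real (card B) * \<sigma> \<ge> (real k + 1) * \<sigma>"
      using sp by (intro mult_right_mono) auto
    moreover have "min \<sigma> (fr * W) \<le> \<sigma>" by simp
    moreover have "(real k + 1) * \<sigma> = real k * \<sigma> + \<sigma>" by (simp add: algebra_simps)
    ultimately show ?thesis using eq r0 mW by linarith
  next
    case nb: False
    hence "real (k - card B) * W \<ge> real (k - card B) * \<sigma>"
      using False by (intro mult_left_mono) auto
    moreover have "real (k - card B) = real k - real (card B)" using nb by simp
    ultimately have "(real k - real (card B)) * W \<ge> (real k - real (card B)) * \<sigma>" by simp
    moreover have "min \<sigma> (fr * W) \<le> fr * W" by simp
    moreover have "(real k + fr) * W - real (card B) * W = (real k - real (card B)) * W + fr * W"
      by (simp add: algebra_simps)
    moreover have "(real k - real (card B)) * \<sigma> = real k * \<sigma> - real (card B) * \<sigma>"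
      by (simp add: algebra_simps)
    ultimately show ?thesis using eq r1 mW by linarith
  qed
qed

theorem mainTheorem11:
  fixes V :: "'v set" and S :: "'s set"
    and \<sigma> :: "'v \<Rightarrow> real" and w :: "'v \<Rightarrow> 's \<Rightarrow> real"
    and \<theta> :: "'s \<Rightarrow> real" and \<pi> :: "'s \<Rightarrow> real"
    and \<sigma>0 :: real and ws :: "'s \<Rightarrow> real" and \<theta>0 :: real
    and \<alpha>t :: "'v \<Rightarrow> 's \<Rightarrow> real"
  assumes "symmetric_network V S \<sigma> w \<theta> \<pi> \<sigma>0 ws \<theta>0"
    and "is_attack V S w \<alpha>t"
    and "tight_attack V S w \<theta> ws \<theta>0 \<alpha>t"
  shows "\<exists>ord \<alpha>c. bij_betw ord {1..card V} V \<and>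
           is_attack V S w \<alpha>c \<and>
           consolidated_attack V S w \<theta> ws \<theta>0 ord \<alpha>c \<and>
           attack_cost V S \<sigma> w \<theta> \<alpha>c \<le> attack_cost V S \<sigma> w \<theta> \<alpha>t \<and>
           attack_prize V S w \<theta> \<pi> \<alpha>c = attack_prize V S w \<theta> \<pi> \<alpha>t"
proof -
  have fin: "finite V" and ne: "V \<noteq> {}" and finS: "finite S"
    and sig: "\<forall>v\<in>V. \<sigma> v = \<sigma>0" and wv: "\<forall>v\<in>V. \<forall>s\<in>S. w v s = ws s"
    and th: "\<forall>s\<in>S. \<theta> s = \<theta>0"
    and sigpos: "\<forall>v\<in>V. \<sigma> v > 0"
    and wb: "\<forall>v\<in>V. \<forall>s\<in>S. 0 \<le> w v s \<and> w v s \<le> \<sigma> v"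
    and thb: "\<forall>s\<in>S. 0 \<le> \<theta> s \<and> \<theta> s \<le> 1"
    using assms(1) unfolding symmetric_network_def restaking_network_def by auto
  have atk: "\<forall>v\<in>V. \<forall>s\<in>S. 0 \<le> \<alpha>t v s \<and> \<alpha>t v s \<le> w v s"
    using assms(2) unfolding is_attack_def by auto
  define m where "m = card V"
  have mpos: "m > 0" using fin ne by (simp add: m_def card_gt_0_iff)
  obtain v0 where v0: "v0 \<in> V" using ne by auto
  have s0: "\<sigma>0 > 0" using sigpos sig v0 by auto
  have wsnn: "\<forall>s\<in>S. ws s \<ge> 0" using wb wv v0 by auto
  define A where "A = attacked V S w \<theta> \<alpha>t"
  have AS: "A \<subseteq> S" by (auto simp: A_def attacked_def)
  have sumw: "\<And>s. s \<in> S \<Longrightarrow> (\<Sum>v\<in>V. w v s) = real m * ws s"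
    using wv by (simp add: m_def)
  have tight: "\<And>s. s \<in> A \<Longrightarrow> (\<Sum>v\<in>V. \<alpha>t v s) = \<theta>0 * real m * ws s"
    using assms(3) unfolding tight_attack_def A_def m_def by auto
  have memA: "\<And>s. s \<in> A \<longleftrightarrow> s \<in> S \<and> (\<Sum>v\<in>V. \<alpha>t v s) \<ge> \<theta>0 * real m * ws s"
    using sumw th by (auto simp: A_def attacked_def)
  obtain ord where ord: "bij_betw ord {1..m} V"
    using ex_bij_betw_nat_finite_1[OF fin] m_def by auto
  define idx where "idx = the_inv_into {1..m} ord"
  have idx_ord: "\<And>i. i \<in> {1..m} \<Longrightarrow> idx (ord i) = i"
    using ord unfolding idx_def by (meson bij_betw_imp_inj_on the_inv_into_f_f)
  define k where "k = nat \<lfloor>\<theta>0 * real m\<rfloor>"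
  define fr where "fr = \<theta>0 * real m - of_int \<lfloor>\<theta>0 * real m\<rfloor>"
  define coef where "coef i = (if i \<le> k then 1 else if i = k + 1 then fr else (0::real))" for i
  define \<alpha>c where "\<alpha>c v s = (if s \<in> A then coef (idx v) * ws s else 0)" for v s
  have fr01: "0 \<le> fr" "fr < 1" unfolding fr_def by linarith+
  show ?thesis
  proof (cases "A = {}")
    case True
    have Ac: "attacked V S w \<theta> \<alpha>c = {}"
    proof -
      { fix s assume s: "s \<in> S" "(\<Sum>v\<in>V. \<alpha>c v s) \<ge> \<theta> s * (\<Sum>v\<in>V. w v s)"
        then have "0 \<ge> \<theta>0 * real m * ws s" using True th sumw by (simp add: \<alpha>c_def)
        moreover have "(\<Sum>v\<in>V. \<alpha>t v s) \<ge> 0" using atk s(1) by (intro sum_nonneg) auto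
        ultimately have "s \<in> A" using memA[of s] s(1) by linarith
        with True have False by simp }
      then show ?thesis by (auto simp: attacked_def)
    qed
    have "is_attack V S w \<alpha>c" using True by (simp add: is_attack_def \<alpha>c_def atk)
      (meson atk order_trans)
    moreover have "consolidated_attack V S w \<theta> ws \<theta>0 ord \<alpha>c"
      using Ac by (simp add: consolidated_attack_def)
    moreover have "attack_cost V S \<sigma> w \<theta> \<alpha>c \<le> attack_cost V S \<sigma> w \<theta> \<alpha>t"
      using Ac True sigpos unfolding attack_cost_def A_def[symmetric]
      by (simp add: less_imp_le)
    moreover have "attack_prize V S w \<theta> \<pi> \<alpha>c = attack_prize V S w \<theta> \<pi> \<alpha>t"
      using Ac True unfolding attack_prize_def A_def[symmetric] by simp
    ultimately show ?thesis using ord m_def by blast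
  next
    case False
    then obtain s1 where "s1 \<in> A" by auto
    hence th01: "0 \<le> \<theta>0" "\<theta>0 \<le> 1" using AS thb th by auto
    have tm: "0 \<le> \<theta>0 * real m" "\<theta>0 * real m \<le> real m"
      using th01 by (auto simp: mult_left_le_one_le)
    have kreal: "real k = of_int \<lfloor>\<theta>0 * real m\<rfloor>" unfolding k_def using tm by simp
    have fl: "\<lfloor>\<theta>0 * real m\<rfloor> \<le> int m"
      using tm(2) floor_le_iff by (simp add: floor_le_iff)
    have km: "k \<le> m" unfolding k_def using fl by simp
    have kfr: "real k + fr = \<theta>0 * real m" using kreal fr_def by simp
    have frk: "k = m \<Longrightarrow> fr = 0" using kfr tm fr01 by simp
    have coefsum: "(\<Sum>i\<in>{1..m}. coef i) = \<theta>0 * real m"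
      using sum_step[OF km, of 1 fr] kfr frk unfolding coef_def by auto
    have reidx: "\<And>g::nat \<Rightarrow> real. (\<Sum>v\<in>V. g (idx v)) = (\<Sum>i\<in>{1..m}. g i)"
    proof -
      fix g :: "nat \<Rightarrow> real"
      have "(\<Sum>i\<in>{1..m}. g (idx (ord i))) = (\<Sum>v\<in>V. g (idx v))"
        using sum.reindex_bij_betw[OF ord, of "\<lambda>v. g (idx v)"] by simp
      moreover have "(\<Sum>i\<in>{1..m}. g (idx (ord i))) = (\<Sum>i\<in>{1..m}. g i)"
        using idx_ord by (intro sum.cong) auto
      ultimately show "(\<Sum>v\<in>V. g (idx v)) = (\<Sum>i\<in>{1..m}. g i)" by simp
    qed
    have sumc: "\<And>s. s \<in> A \<Longrightarrow> (\<Sum>v\<in>V. \<alpha>c v s) = \<theta>0 * real m * ws s"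
    proof -
      fix s assume "s \<in> A"
      hence "(\<Sum>v\<in>V. \<alpha>c v s) = (\<Sum>v\<in>V. coef (idx v) * ws s)" by (simp add: \<alpha>c_def)
      also have "\<dots> = (\<Sum>i\<in>{1..m}. coef i * ws s)" by (rule reidx)
      also have "\<dots> = \<theta>0 * real m * ws s" using coefsum by (simp add: sum_distrib_right[symmetric])
      finally show "(\<Sum>v\<in>V. \<alpha>c v s) = \<theta>0 * real m * ws s" .
    qed
    have Ac: "attacked V S w \<theta> \<alpha>c = A"
    proof -
      { fix s assume s: "s \<in> S" "(\<Sum>v\<in>V. \<alpha>c v s) \<ge> \<theta> s * (\<Sum>v\<in>V. w v s)" "s \<notin> A"
        then have "0 \<ge> \<theta>0 * real m * ws s" using th sumw by (simp add: \<alpha>c_def)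
        moreover have "(\<Sum>v\<in>V. \<alpha>t v s) \<ge> 0" using atk s(1) by (intro sum_nonneg) auto
        ultimately have "s \<in> A" using memA[of s] s(1) by linarith
        with s(3) have False by simp }
      moreover have "\<And>s. s \<in> A \<Longrightarrow> s \<in> attacked V S w \<theta> \<alpha>c"
        using sumc AS sumw th by (auto simp: attacked_def)
      ultimately show ?thesis by (auto simp: attacked_def)
    qed
    have coefb: "\<And>i. 0 \<le> coef i \<and> coef i \<le> 1" using fr01 by (simp add: coef_def)
    have isc: "is_attack V S w \<alpha>c"
      unfolding is_attack_def
    proof (intro ballI)
      fix v s assume v: "v \<in> V" and s: "s \<in> S"
      have "0 \<le> coef (idx v) * ws s \<and> coef (idx v) * ws s \<le> ws s"
        using coefb[of "idx v"] wsnn s by (simp add: mult_left_le_one_le)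
      then show "0 \<le> \<alpha>c v s \<and> \<alpha>c v s \<le> w v s"
        using wv v s wsnn by (auto simp: \<alpha>c_def)
    qed
    have cons: "consolidated_attack V S w \<theta> ws \<theta>0 ord \<alpha>c"
      unfolding consolidated_attack_def Let_def Ac m_def[symmetric] k_def[symmetric]
        fr_def[symmetric]
      using idx_ord by (auto simp: \<alpha>c_def coef_def)
    define W where "W = (\<Sum>s\<in>A. ws s)"
    define x where "x v = (\<Sum>s\<in>A. \<alpha>t v s)" for v
    have finA: "finite A" using AS finS finite_subset by auto
    have xb: "\<forall>v\<in>V. 0 \<le> x v \<and> x v \<le> W"
    proof
      fix v assume v: "v \<in> V"
      have "0 \<le> x v" unfolding x_def using atk v AS by (intro sum_nonneg) auto
      moreover have "x v \<le> W" unfolding x_def W_def using atk v AS wv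
        by (intro sum_mono) auto
      ultimately show "0 \<le> x v \<and> x v \<le> W" by simp
    qed
    have xtot: "(\<Sum>v\<in>V. x v) = (real k + fr) * W"
    proof -
      have "(\<Sum>v\<in>V. x v) = (\<Sum>s\<in>A. \<Sum>v\<in>V. \<alpha>t v s)" unfolding x_def by (rule sum.swap)
      also have "\<dots> = (\<Sum>s\<in>A. \<theta>0 * real m * ws s)" using tight by simp
      finally show ?thesis by (simp add: kfr W_def sum_distrib_left)
    qed
    have costt: "attack_cost V S \<sigma> w \<theta> \<alpha>t = (\<Sum>v\<in>V. min \<sigma>0 (x v))"
      unfolding attack_cost_def A_def[symmetric] x_def using sig by simp
    have "attack_cost V S \<sigma> w \<theta> \<alpha>c = (\<Sum>v\<in>V. min \<sigma>0 (coef (idx v) * W))"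
      unfolding attack_cost_def Ac using sig
      by (intro sum.cong) (auto simp: \<alpha>c_def W_def sum_distrib_left)
    also have "\<dots> = (\<Sum>i\<in>{1..m}. min \<sigma>0 (coef i * W))" by (rule reidx)
    also have "\<dots> = (\<Sum>i\<in>{1..m}. (if i \<le> k then min \<sigma>0 W else if i = k+1 then min \<sigma>0 (fr * W) else 0))"
      using s0 by (intro sum.cong) (auto simp: coef_def)
    also have "\<dots> = real k * min \<sigma>0 W + (if k < m then min \<sigma>0 (fr * W) else 0)"
      by (rule sum_step[OF km])
    also have "\<dots> \<le> real k * min \<sigma>0 W + min \<sigma>0 (fr * W)"
      using frk s0 km by auto
    also have "\<dots> \<le> (\<Sum>v\<in>V. min \<sigma>0 (x v))"
      using key[OF fin xb s0 _ fr01 xtot] wsnn AS unfolding W_def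
      by (meson subsetD sum_nonneg)
    finally have "attack_cost V S \<sigma> w \<theta> \<alpha>c \<le> attack_cost V S \<sigma> w \<theta> \<alpha>t" using costt by simp
    moreover have "attack_prize V S w \<theta> \<pi> \<alpha>c = attack_prize V S w \<theta> \<pi> \<alpha>t"
      unfolding attack_prize_def Ac A_def ..
    ultimately show ?thesis using ord isc cons m_def by blast
  qed
qed

end
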